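(* Let $\Phi\colon\mathcal{M}(2;\mathbb{C})\dashrightarrow\mathcal{M}(2;\mathbb{C})$ be a rational map compatible with conjugation. Then $\Phi$ preserves the fibration in $2$-planes $\mathcal{P}$ fiber by fiber, i.e. for generic $\mathrm{M}$, $\Phi(\mathrm{M})\in\mathcal{P}(\mathrm{M})$.
   Context: $\mathcal{C}=\{\lambda\mathrm{Id}:\lambda\in\mathbb{C}\}$. For $\mathrm{M}\in\mathcal{M}(2;\mathbb{C})\setminus\mathcal{C}$, $\mathcal{P}(\mathrm{M})$ is the unique $2$-plane containing $\mathrm{M}$ and $\mathcal{C}$, namely $\{s\mathrm{M}+t\mathrm{Id}\}$ (equivalently the set of matrices commuting with $\mathrm{M}$). $\Phi$ is compatible with conjugation if $\mathrm{A}\Phi(\mathrm{M})\mathrm{A}^{-1}=\Phi(\mathrm{A}\mathrm{M}\mathrm{A}^{-1})$ for all $\mathrm{A}\in\mathrm{GL}(2;\mathbb{C})$ whenever both sides are defined. *)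

theory Defs
  imports "HOL-Analysis.Analysis"
begin

type_synonym mat2 = "complex^2^2"

inductive poly_fun :: "(mat2 \<Rightarrow> complex) \<Rightarrow> bool" where
  const: "poly_fun (\<lambda>M. c)"
| entry: "poly_fun (\<lambda>M. M $ i $ j)"
| add: "poly_fun p \<Longrightarrow> poly_fun q \<Longrightarrow> poly_fun (\<lambda>M. p M + q M)"
| mult: "poly_fun p \<Longrightarrow> poly_fun q \<Longrightarrow> poly_fun (\<lambda>M. p M * q M)"

text \<open>Phi is regarded as defined exactly where Q does not vanish.\<close>
definition rational_map :: "(mat2 \<Rightarrow> mat2) \<Rightarrow> (mat2 \<Rightarrow> complex) \<Rightarrow> bool" where
  "rational_map \<Phi> Q \<longleftrightarrow> poly_fun Q \<and> (\<exists>M. Q M \<noteq> 0) \<and>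
     (\<exists>P. (\<forall>i j. poly_fun (P i j)) \<and>
          (\<forall>M. Q M \<noteq> 0 \<longrightarrow> (\<forall>i j. \<Phi> M $ i $ j = P i j M / Q M)))"

definition compatible_conj :: "(mat2 \<Rightarrow> mat2) \<Rightarrow> (mat2 \<Rightarrow> complex) \<Rightarrow> bool" where
  "compatible_conj \<Phi> Q \<longleftrightarrow>
     (\<forall>A M. invertible A \<longrightarrow> Q M \<noteq> 0 \<longrightarrow> Q (A ** M ** matrix_inv A) \<noteq> 0 \<longrightarrow>
        A ** \<Phi> M ** matrix_inv A = \<Phi> (A ** M ** matrix_inv A))"

definition cscale :: "complex \<Rightarrow> mat2 \<Rightarrow> mat2" where
  "cscale s M = (\<chi> i j. s * M $ i $ j)"

definition scalar_mats :: "mat2 set" where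
  "scalar_mats = range mat"

definition plane :: "mat2 \<Rightarrow> mat2 set" where
  "plane M = {cscale s M + mat t | s t. True}"

end

theory Submission
  imports Defs
begin

lemma inv_props:
  assumes "invertible (A::mat2)"
  shows "A ** matrix_inv A = mat 1 \<and> matrix_inv A ** A = mat 1"
  using assms unfolding invertible_def matrix_inv_def by (rule someI_ex)

lemma poly_fun_cont: "poly_fun p \<Longrightarrow> continuous_on UNIV p"
  by (induction rule: poly_fun.induct) (auto intro!: continuous_intros)

lemma mat2_eq: "(X::mat2) = Y \<longleftrightarrow> X$1$1 = Y$1$1 \<and> X$1$2 = Y$1$2 \<and> X$2$1 = Y$2$1 \<and> X$2$2 = Y$2$2"
  by (auto simp: vec_eq_iff forall_2)

lemma commute_plane:
  fixes M N :: mat2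
  assumes "M ** N = N ** M" "M$1$2 \<noteq> 0"
  shows "N \<in> plane M"
proof -
  let ?a = "M$1$1" and ?b = "M$1$2" and ?c = "M$2$1" and ?d = "M$2$2"
  let ?x = "N$1$1" and ?y = "N$1$2" and ?z = "N$2$1" and ?w = "N$2$2"
  have e: "(M ** N) $ i $ j = (N ** M) $ i $ j" for i j using assms(1) by simp
  have e1: "?a*?x + ?b*?z = ?x*?a + ?y*?c" using e[of 1 1] by (simp add: matrix_matrix_mult_def sum_2)
  have e2: "?a*?y + ?b*?w = ?x*?b + ?y*?d" using e[of 1 2] by (simp add: matrix_matrix_mult_def sum_2)
  define s where "s = ?y / ?b"
  define t where "t = ?x - s * ?a"
  have z: "?z = s * ?c" using e1 assms(2) unfolding s_def by (simp add: field_simps)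
  have w: "?w = ?x + s * (?d - ?a)" using e2 assms(2) unfolding s_def by (simp add: field_simps)
  have "N = cscale s M + mat t"
    unfolding mat2_eq using assms(2) z w
    by (simp add: cscale_def mat_def s_def t_def field_simps)
  thus ?thesis unfolding plane_def by blast
qed

lemma exists_inv_shift:
  fixes M :: mat2
  shows "\<exists>t. invertible (M + mat t)"
proof (rule ccontr)
  assume "\<not> ?thesis"
  hence h: "det (M + mat t) = 0" for t by (simp add: invertible_det_nz)
  have "det (M + mat t) = (M$1$1 + t) * (M$2$2 + t) - M$1$2 * M$2$1" for t
    by (simp add: det_2 mat_def)
  with h have "(M$1$1 + t) * (M$2$2 + t) - M$1$2 * M$2$1 = 0" for t by simp
  from this[of 0] this[of 1] this[of 2] have
    "M$1$1 * M$2$2 = M$1$2 * M$2$1" "1 + (M$1$1 + M$2$2) = 0" "4 + 2 * (M$1$1 + M$2$2) = 0"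
    by (simp_all add: algebra_simps)
  then have "M$1$1 + M$2$2 = -1" "4 + 2 * (M$1$1 + M$2$2) = 0"
    by (simp_all add: add_eq_0_iff)
  then have "(4::complex) + 2 * (-1) = 0" by simp
  thus False by simp
qed

lemma matrix_add_rdistrib': "((A::'a::semiring_1^'n^'m) + B) ** C = (A ** C) + (B ** C)"
  by (vector matrix_matrix_mult_def sum.distrib[symmetric] field_simps)
lemma mat_mul_l: "mat (t::'a::comm_semiring_1) ** (N::'a^'n^'n) = (\<chi> i j. t * N$i$j)"
  unfolding matrix_matrix_mult_def mat_def
  by (auto simp: vec_eq_iff if_distrib if_distribR sum.delta'[OF finite] cong: if_cong)
lemma mat_mul_r: "(N::'a::comm_semiring_1^'n^'n) ** mat t = (\<chi> i j. t * N$i$j)"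
  unfolding matrix_matrix_mult_def mat_def
  by (auto simp: vec_eq_iff if_distrib if_distribR sum.delta'[OF finite] mult.commute cong: if_cong)
lemma commBack: assumes "((M::mat2) + mat t) ** N = N ** (M + mat t)" shows "M ** N = N ** M"
  using assms by (simp add: matrix_add_rdistrib' matrix_add_ldistrib mat_mul_l mat_mul_r)
lemma AM: "((M::mat2) + mat t) ** M = M ** (M + mat t)"
  by (simp add: matrix_add_rdistrib' matrix_add_ldistrib mat_mul_l mat_mul_r)

lemma main_commute:
  assumes comp: "compatible_conj \<Phi> Q" and q: "Q M \<noteq> 0"
  shows "M ** \<Phi> M = \<Phi> M ** M"
proof -
  obtain t where inv: "invertible (M + mat t)" using exists_inv_shift by blast
  define A where "A = M + mat t"
  have AM: "A ** M = M ** A" unfolding A_def by (rule AM)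
  have ip: "A ** matrix_inv A = mat 1" "matrix_inv A ** A = mat 1"
    using inv_props[OF inv] unfolding A_def by auto
  have conjM: "A ** M ** matrix_inv A = M"
    by (metis AM ip(1) matrix_mul_assoc matrix_mul_rid)
  have "A ** \<Phi> M ** matrix_inv A = \<Phi> M"
  proof -
    have "invertible A" using inv A_def by simp
    moreover have "Q (A ** M ** matrix_inv A) \<noteq> 0" using conjM q by simp
    ultimately have "A ** \<Phi> M ** matrix_inv A = \<Phi> (A ** M ** matrix_inv A)"
      using comp[unfolded compatible_conj_def, rule_format, of A M] q by blast
    thus ?thesis using conjM by simp
  qed
  hence "A ** \<Phi> M ** matrix_inv A ** A = \<Phi> M ** A" by (rule arg_cong)
  hence "A ** \<Phi> M = \<Phi> M ** A"
    by (metis ip(2) matrix_mul_assoc matrix_mul_rid)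
  thus ?thesis unfolding A_def by (rule commBack)
qed

theorem proposition2p16:
  fixes \<Phi> :: "mat2 \<Rightarrow> mat2" and Q :: "mat2 \<Rightarrow> complex"
  assumes "rational_map \<Phi> Q"
    and "compatible_conj \<Phi> Q"
  shows "\<exists>R. poly_fun R \<and> (\<exists>M. R M \<noteq> 0) \<and>
           (\<forall>M. R M \<noteq> 0 \<longrightarrow> Q M \<noteq> 0 \<and> M \<notin> scalar_mats \<and> \<Phi> M \<in> plane M)"
proof -
  from assms(1) have pQ: "poly_fun Q" and "\<exists>M. Q M \<noteq> 0" unfolding rational_map_def by auto
  then obtain M0 where M0: "Q M0 \<noteq> 0" by blast
  define E :: mat2 where "E = (\<chi> i j. if i = 1 \<and> j = 2 then 1 else 0)"
  define g where "g = (\<lambda>e::real. Q (M0 + e *\<^sub>R E))"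
  have "continuous_on UNIV g" unfolding g_def
    by (rule continuous_on_compose2[OF poly_fun_cont[OF pQ]]) (auto intro!: continuous_intros)
  hence "continuous (at 0) g" by (simp add: continuous_on_eq_continuous_at)
  moreover have "g 0 \<noteq> 0" using M0 by (simp add: g_def)
  ultimately obtain d where d: "d > 0" "\<And>y. dist 0 y < d \<Longrightarrow> g y \<noteq> 0"
    using continuous_at_avoid by blast
  define y where "y = (if M0$1$2 = 0 then d/2 else 0)"
  have gy: "g y \<noteq> 0" using d by (intro d(2)) (simp add: y_def)
  define M1 where "M1 = M0 + y *\<^sub>R E"
  have E12: "E$1$2 = 1" by (simp add: E_def)
  have M1: "Q M1 \<noteq> 0" "M1$1$2 \<noteq> 0"
    using gy d(1) E12 by (auto simp: g_def M1_def y_def)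
  define R where "R = (\<lambda>M. Q M * M$1$2)"
  have "poly_fun R" unfolding R_def by (intro poly_fun.mult pQ poly_fun.entry)
  moreover have "R M1 \<noteq> 0" using M1 by (simp add: R_def)
  moreover have "Q M \<noteq> 0 \<and> M \<notin> scalar_mats \<and> \<Phi> M \<in> plane M" if "R M \<noteq> 0" for M
  proof -
    have q: "Q M \<noteq> 0" and b: "M$1$2 \<noteq> 0" using that by (auto simp: R_def)
    have "M \<notin> scalar_mats" using b by (auto simp: scalar_mats_def mat_def)
    moreover have "\<Phi> M \<in> plane M"
      by (rule commute_plane[OF main_commute[OF assms(2) q] b])
    ultimately show ?thesis using q by blast
  qed
  ultimately show ?thesis by blast
qed

end
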